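(* Let $q\in\Delta_1^m$ be a prior with all entries positive and $\Phi\in\mathbb{R}^{z\times m}$ a $q$-identifying signalling scheme with $\sum_\ell\phi^u_\ell q_\ell>0$ for all $u\in[z]$. For observed flows $\widetilde f^{\zeta^u}\in\mathcal{W}^{\widetilde q^{\zeta^u}}$, $u\in[z]$, define $$\mathcal{Q}^{=}_\Phi=\Big\{\psi\in\mathbb{R}^m:\ \mathbb{1}^\top\psi=1,\ \sum_{s\in[m]}\phi^u_s\big(C^{\theta_s}_p(\widetilde f^{\zeta^u})-C^{\theta_s}_r(\widetilde f^{\zeta^u})\big)\psi_s=0\ \ \forall u\in[z],\ \forall p,r\in\mathcal{P}\text{ with }\widetilde f^{\zeta^u}_p,\widetilde f^{\zeta^u}_r>0\Big\}.$$ If $\mathcal{Q}^{=}_\Phi=\{q\}$, then there exists $\delta>0$ such that for every $\widehat q\in\Delta_1^m$ with $\|q-\widehat q\|<\delta$, the scheme $\Phi$ is $\widehat q$-identifying.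
   Context: Let $\mathcal{G}=(\mathcal{V},\mathcal{E})$ be a finite directed graph with an origin $v_o$ and a destination $v_d$, and let $\mathcal{P}$ be the (finite) set of acyclic directed paths from $v_o$ to $v_d$, $n=|\mathcal{P}|$. The set of feasible path-flows is $\mathcal{H}=\{f\in\mathbb{R}^n_{\ge0}:\sum_{p\in\mathcal{P}}f_p=1\}$. For a path-flow $f$, the flow on edge $e_k$ is $f_{e_k}=\sum_{p\ni e_k}f_p$. There is a finite set of states $\Theta=\{\theta_1,\dots,\theta_m\}$; in each state $\theta_s$ each edge $e_k$ has a known cost function $C^{\theta_s}_{e_k}:\mathbb{R}_{\ge0}\to\mathbb{R}_{\ge0}$ that is continuous and strictly increasing. The cost of path $p$ in state $\theta_s$ is $C^{\theta_s}_p(f)=\sum_{e_k\in p}C^{\theta_s}_{e_k}(f_{e_k})$. For $\varphi\in\Delta_1^m:=\{x\in\mathbb{R}^m_{\ge0}:\sum_i x_i=1\}$ the expected cost of path $p$ is $C^\varphi_p(f)=\sum_{s}\varphi_sC^{\theta_s}_p(f)$. A flow $f\in\mathcal{H}$ is a $\varphi$-based Wardrop equilibrium ($\varphi$-WE) if for all $p$ with $f_p>0$ we have $C^\varphi_p(f)\le C^\varphi_r(f)$ for all $r\in\mathcal{P}$; $\mathcal{W}^\varphi$ denotes the set of $\varphi$-WE. A (public) signalling scheme with signals $\zeta^1,\dots,\zeta^z$ is a column-stochastic matrix $\Phi=(\phi^u_s)\in\mathbb{R}^{z\times m}_{\ge0}$, where $\phi^u_s$ is the probability of sending $\zeta^u$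 in state $\theta_s$. Given a prior $q$ (entries positive), the posterior after $\zeta^u$ is $\widetilde q^{\zeta^u}_s=\phi^u_sq_s/\sum_\ell\phi^u_\ell q_\ell$, and the observed flow under $\zeta^u$ is some $\widetilde f^{\zeta^u}\in\mathcal{W}^{\widetilde q^{\zeta^u}}$. The set $\mathcal{Q}_\Phi$ (relative to the prior $q$) consists of all $\psi\in\Delta_1^m$ such that for every signal $u$: $\sum_s\phi^u_s(C^{\theta_s}_p(\widetilde f^{\zeta^u})-C^{\theta_s}_r(\widetilde f^{\zeta^u}))\psi_s=0$ for all $p,r$ with $\widetilde f^{\zeta^u}_p,\widetilde f^{\zeta^u}_r>0$, and $\sum_s\phi^u_s(C^{\theta_s}_p(\widetilde f^{\zeta^u})-C^{\theta_s}_r(\widetilde f^{\zeta^u}))\psi_s\le0$ for all $p,r$ with $\widetilde f^{\zeta^u}_p>0$, $\widetilde f^{\zeta^u}_r=0$ (this set does not depend on which posterior-WE are observed). $\Phi$ is called $q$-identifying if $\mathcal{Q}_\Phi=\{q\}$; $\widehat q$-identifying is defined in the same way with $\widehat q$ as the prior generating the posteriors and observed flows. *)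

theory Defs
  imports Complex_Main
begin

definition path_edges :: "'v list \<Rightarrow> ('v \<times> 'v) set" where
  "path_edges p = set (zip p (tl p))"

definition od_paths :: "('v \<times> 'v) set \<Rightarrow> 'v \<Rightarrow> 'v \<Rightarrow> 'v list set" where
  "od_paths E vo vd = {p. p \<noteq> [] \<and> hd p = vo \<and> last p = vd \<and> distinct p \<and> path_edges p \<subseteq> E}"

definition edge_flow :: "'v list set \<Rightarrow> ('v list \<Rightarrow> real) \<Rightarrow> ('v \<times> 'v) \<Rightarrow> real" where
  "edge_flow P f e = (\<Sum>p\<in>{p\<in>P. e \<in> path_edges p}. f p)"

definition path_cost ::
  "(nat \<Rightarrow> ('v \<times> 'v) \<Rightarrow> real \<Rightarrow> real) \<Rightarrow> 'v list set \<Rightarrow> nat \<Rightarrow> ('v list \<Rightarrow> real) \<Rightarrow> 'v list \<Rightarrow> real" where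
  "path_cost C P s f p = (\<Sum>e\<in>path_edges p. C s e (edge_flow P f e))"

definition exp_cost ::
  "(nat \<Rightarrow> ('v \<times> 'v) \<Rightarrow> real \<Rightarrow> real) \<Rightarrow> nat \<Rightarrow> 'v list set \<Rightarrow> (nat \<Rightarrow> real) \<Rightarrow> ('v list \<Rightarrow> real) \<Rightarrow> 'v list \<Rightarrow> real" where
  "exp_cost C m P \<phi> f p = (\<Sum>s<m. \<phi> s * path_cost C P s f p)"

definition feasible_flow :: "'v list set \<Rightarrow> ('v list \<Rightarrow> real) \<Rightarrow> bool" where
  "feasible_flow P f \<longleftrightarrow> (\<forall>p\<in>P. f p \<ge> 0) \<and> (\<Sum>p\<in>P. f p) = 1"

definition wardrop ::
  "(nat \<Rightarrow> ('v \<times> 'v) \<Rightarrow> real \<Rightarrow> real) \<Rightarrow> nat \<Rightarrow> 'v list set \<Rightarrow> (nat \<Rightarrow> real) \<Rightarrow> ('v list \<Rightarrow> real) set" where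
  "wardrop C m P \<phi> = {f. feasible_flow P f \<and>
     (\<forall>p\<in>P. f p > 0 \<longrightarrow> (\<forall>r\<in>P. exp_cost C m P \<phi> f p \<le> exp_cost C m P \<phi> f r))}"

text \<open>Probability simplex in R^m, vectors represented as functions nat => real that
  vanish outside 0..<m.\<close>
definition simplex :: "nat \<Rightarrow> (nat \<Rightarrow> real) set" where
  "simplex m = {x. (\<forall>s<m. x s \<ge> 0) \<and> (\<Sum>s<m. x s) = 1 \<and> (\<forall>s\<ge>m. x s = 0)}"

text \<open>Signalling scheme: Phi u s = probability of signal u (u < z) in state s (s < m).\<close>
definition signalling_scheme :: "nat \<Rightarrow> nat \<Rightarrow> (nat \<Rightarrow> nat \<Rightarrow> real) \<Rightarrow> bool" where
  "signalling_scheme z m \<Phi> \<longleftrightarrow> (\<forall>u<z. \<forall>s<m. \<Phi> u s \<ge> 0) \<and> (\<forall>s<m. (\<Sum>u<z. \<Phi> u s) = 1)"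

definition posterior :: "nat \<Rightarrow> (nat \<Rightarrow> nat \<Rightarrow> real) \<Rightarrow> (nat \<Rightarrow> real) \<Rightarrow> nat \<Rightarrow> nat \<Rightarrow> real" where
  "posterior m \<Phi> q u = (\<lambda>s. if s < m then \<Phi> u s * q s / (\<Sum>l<m. \<Phi> u l * q l) else 0)"

definition cdiff ::
  "(nat \<Rightarrow> ('v \<times> 'v) \<Rightarrow> real \<Rightarrow> real) \<Rightarrow> nat \<Rightarrow> 'v list set \<Rightarrow> (nat \<Rightarrow> nat \<Rightarrow> real)
    \<Rightarrow> (nat \<Rightarrow> 'v list \<Rightarrow> real) \<Rightarrow> nat \<Rightarrow> 'v list \<Rightarrow> 'v list \<Rightarrow> (nat \<Rightarrow> real) \<Rightarrow> real" where
  "cdiff C m P \<Phi> F u p r \<psi> =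
     (\<Sum>s<m. \<Phi> u s * (path_cost C P s (F u) p - path_cost C P s (F u) r) * \<psi> s)"

definition Q_Phi ::
  "(nat \<Rightarrow> ('v \<times> 'v) \<Rightarrow> real \<Rightarrow> real) \<Rightarrow> nat \<Rightarrow> nat \<Rightarrow> 'v list set \<Rightarrow> (nat \<Rightarrow> nat \<Rightarrow> real)
    \<Rightarrow> (nat \<Rightarrow> 'v list \<Rightarrow> real) \<Rightarrow> (nat \<Rightarrow> real) set" where
  "Q_Phi C m z P \<Phi> F = {\<psi> \<in> simplex m. \<forall>u<z. \<forall>p\<in>P. \<forall>r\<in>P. F u p > 0 \<longrightarrow>
      ((F u r > 0 \<longrightarrow> cdiff C m P \<Phi> F u p r \<psi> = 0) \<and>
       (F u r = 0 \<longrightarrow> cdiff C m P \<Phi> F u p r \<psi> \<le> 0))}"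

text \<open>The set Q^=_Phi (affine, psi not required nonnegative).\<close>
definition Q_eq_Phi ::
  "(nat \<Rightarrow> ('v \<times> 'v) \<Rightarrow> real \<Rightarrow> real) \<Rightarrow> nat \<Rightarrow> nat \<Rightarrow> 'v list set \<Rightarrow> (nat \<Rightarrow> nat \<Rightarrow> real)
    \<Rightarrow> (nat \<Rightarrow> 'v list \<Rightarrow> real) \<Rightarrow> (nat \<Rightarrow> real) set" where
  "Q_eq_Phi C m z P \<Phi> F = {\<psi>. (\<forall>s\<ge>m. \<psi> s = 0) \<and> (\<Sum>s<m. \<psi> s) = 1 \<and>
      (\<forall>u<z. \<forall>p\<in>P. \<forall>r\<in>P. F u p > 0 \<longrightarrow> F u r > 0 \<longrightarrow> cdiff C m P \<Phi> F u p r \<psi> = 0)}"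

definition identifying ::
  "(nat \<Rightarrow> ('v \<times> 'v) \<Rightarrow> real \<Rightarrow> real) \<Rightarrow> nat \<Rightarrow> nat \<Rightarrow> 'v list set \<Rightarrow> (nat \<Rightarrow> nat \<Rightarrow> real)
    \<Rightarrow> (nat \<Rightarrow> real) \<Rightarrow> bool" where
  "identifying C m z P \<Phi> prior \<longleftrightarrow>
     (\<forall>F. (\<forall>u<z. F u \<in> wardrop C m P (posterior m \<Phi> prior u)) \<longrightarrow> Q_Phi C m z P \<Phi> F = {prior})"

end

theory Submission imports Defs begin

lemma pe_append_cons:
  "path_edges (xs @ y # ys) = path_edges (xs @ [y]) \<union> path_edges (y # ys)"
proof (induction xs)
  case Nil then show ?case by (simp add: path_edges_def)
next
  case (Cons a xs)
  then show ?case by (cases xs) (auto simp: path_edges_def)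
qed

lemma pe_mem: "(x,y) \<in> path_edges l \<Longrightarrow> x \<in> set (butlast l) \<and> y \<in> set (tl l)"
proof (induction l)
  case Nil then show ?case by (simp add: path_edges_def)
next
  case (Cons a l)
  then show ?case by (cases l) (auto simp: path_edges_def)
qed

lemma pe_finite: "finite (path_edges p)"
  by (simp add: path_edges_def)

lemma pe_single[simp]: "path_edges [v] = {}"
  by (simp add: path_edges_def)

lemma pe_snoc: "path_edges (c @ [v, w]) = path_edges (c @ [v]) \<union> {(v,w)}"
  using pe_append_cons[of c v "[w]"] by (simp add: path_edges_def)

lemma pe_disjoint:
  assumes "distinct (a @ v # b)"
  shows "path_edges (a @ [v]) \<inter> path_edges (v # b) = {}"
proof -
  { fix x y assume "(x,y) \<in> path_edges (a @ [v])" "(x,y) \<in> path_edges (v # b)"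
    then have "x \<in> set a" "x \<in> set (v # b)" using pe_mem[of x y "a @ [v]"] pe_mem[of x y "v # b"]
      by (auto dest: in_set_butlastD split: if_splits)
    with assms have False by auto }
  then show ?thesis by auto
qed

lemma shortcut:
  "w \<noteq> [] \<Longrightarrow> \<exists>p. p \<noteq> [] \<and> distinct p \<and> hd p = hd w \<and> last p = last w \<and> path_edges p \<subseteq> path_edges w"
proof (induction "length w" arbitrary: w rule: less_induct)
  case less
  show ?case
  proof (cases "distinct w")
    case True then show ?thesis using less.prems by blast
  next
    case False
    then obtain xs ys zs y where w: "w = xs @ [y] @ ys @ [y] @ zs" using not_distinct_decomp by blast
    define w' where "w' = xs @ y # zs"
    have "length w' < length w" by (simp add: w w'_def)
    moreover have "w' \<noteq> []" by (simp add: w'_def)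
    ultimately obtain p where p: "p \<noteq> [] \<and> distinct p \<and> hd p = hd w' \<and> last p = last w' \<and> path_edges p \<subseteq> path_edges w'"
      using less.hyps by blast
    have "path_edges w' \<subseteq> path_edges w"
      using pe_append_cons[of xs y zs] pe_append_cons[of xs y "ys @ y # zs"]
        pe_append_cons[of "y # ys" y zs]
      by (auto simp: w w'_def)
    moreover have "hd w' = hd w" by (cases xs) (auto simp: w w'_def)
    moreover have "last w' = last w" by (cases zs) (auto simp: w w'_def)
    ultimately show ?thesis using p by auto
  qed
qed

lemma finite_od_paths:
  assumes "finite E" shows "finite (od_paths E vo vd)"
proof -
  let ?A = "insert vo (snd ` E)"
  have "od_paths E vo vd \<subseteq> {xs. set xs \<subseteq> ?A \<and> distinct xs}"
  proof
    fix p assume "p \<in> od_paths E vo vd"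
    then have p: "p \<noteq> []" "hd p = vo" "distinct p" "path_edges p \<subseteq> E" by (auto simp: od_paths_def)
    then obtain a l where pl: "p = a # l" by (cases p) auto
    have "set l \<subseteq> snd ` E"
    proof
      fix y assume "y \<in> set l"
      then have "y \<in> set (map snd (zip (a # l) l))" using map_snd_zip_take[of "a # l" l] by simp
      then obtain x where "(x,y) \<in> set (zip (a # l) l)" by auto
      then have "(x,y) \<in> E" using p(4) pl by (auto simp: path_edges_def)
      then show "y \<in> snd ` E" by force
    qed
    then show "p \<in> {xs. set xs \<subseteq> ?A \<and> distinct xs}" using p pl by auto
  qed
  moreover have "finite {xs. set xs \<subseteq> ?A \<and> distinct xs}"
    by (rule finite_subset_distinct) (use assms in auto)
  ultimately show ?thesis by (rule finite_subset)
qed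

definition W :: "(('v \<times> 'v) \<Rightarrow> real) \<Rightarrow> 'v list \<Rightarrow> real" where
  "W h w = (\<Sum>e\<in>path_edges w. h e)"

lemma pe_decomp: "(x,y) \<in> path_edges p \<Longrightarrow> \<exists>a b. p = a @ x # y # b"
proof (induction p)
  case Nil then show ?case by (simp add: path_edges_def)
next
  case (Cons c p)
  show ?case
  proof (cases p)
    case Nil then show ?thesis using Cons.prems by (simp add: path_edges_def)
  next
    case (Cons d p')
    show ?thesis
    proof (cases "(x,y) = (c,d)")
      case True then show ?thesis using Cons by (intro exI[of _ "[]"] exI[of _ p']) auto
    next
      case False
      then have "(x,y) \<in> path_edges p" using Cons.prems Cons by (auto simp: path_edges_def)
      then obtain a b where "p = a @ x # y # b" using Cons.IH by blast
      then show ?thesis by (metis append_Cons)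
    qed
  qed
qed

lemma W_split:
  assumes "distinct (a @ v # b)"
  shows "W h (a @ v # b) = W h (a @ [v]) + W h (v # b)"
  unfolding W_def pe_append_cons[of a v b]
  by (rule sum.union_disjoint) (auto simp: pe_finite pe_disjoint[OF assms])

lemma W_mono:
  assumes "\<forall>e\<in>E. h e \<ge> 0" "path_edges w \<subseteq> E" "path_edges s \<subseteq> path_edges w"
  shows "W h s \<le> W h w"
  unfolding W_def using assms by (intro sum_mono2) (auto simp: pe_finite)

lemma W_un_le:
  fixes h :: "('v \<times> 'v) \<Rightarrow> real"
  assumes "\<forall>e\<in>E. h e \<ge> 0" "A \<subseteq> E" "B \<subseteq> E" "finite A" "finite B"
  shows "sum h (A \<union> B) \<le> sum h A + sum h B"
proof -
  have "sum h (A \<inter> B) \<ge> 0" by (rule sum_nonneg) (use assms in auto)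
  then show ?thesis using sum_Un[OF assms(4,5), of h] by linarith
qed

lemma W_snoc:
  assumes "distinct (c @ [v, w])"
  shows "W h (c @ [v, w]) = W h (c @ [v]) + h (v,w)"
proof -
  have "(v,w) \<notin> path_edges (c @ [v])"
  proof
    assume "(v,w) \<in> path_edges (c @ [v])"
    then have "w \<in> set (tl (c @ [v]))" using pe_mem[of v w "c @ [v]"] by blast
    then have "w \<in> set (c @ [v])" by (metis list.set_sel(2) list.sel(2))
    with assms show False by auto
  qed
  then show ?thesis unfolding W_def pe_snoc by (simp add: pe_finite)
qed

lemma claimA:
  assumes hnn: "\<forall>e\<in>E. h e \<ge> 0"
    and U: "U \<subseteq> od_paths E vo vd" and Umin: "\<forall>p\<in>U. W h p = \<mu>"
    and Pmin: "\<forall>r\<in>od_paths E vo vd. \<mu> \<le> W h r"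
    and p1: "a1 @ v # b1 \<in> U" and p2: "a2 @ v # b2 \<in> U"
  shows "W h (a2 @ [v]) \<le> W h (a1 @ [v])"
proof -
  have P1: "a1 @ v # b1 \<in> od_paths E vo vd" and P2: "a2 @ v # b2 \<in> od_paths E vo vd" using p1 p2 U by auto
  define w where "w = a1 @ v # b2"
  have "w \<noteq> []" by (simp add: w_def)
  then obtain s where s: "s \<noteq> []" "distinct s" "hd s = hd w" "last s = last w" "path_edges s \<subseteq> path_edges w"
    using shortcut by blast
  have hdw: "hd w = vo" using P1 unfolding w_def od_paths_def by (cases a1) auto
  have lastw: "last w = vd" using P2 unfolding w_def od_paths_def by (cases b2) auto
  have e1: "path_edges (a1 @ [v]) \<subseteq> E" using P1 pe_append_cons[of a1 v b1] by (auto simp: od_paths_def)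
  have e2: "path_edges (v # b2) \<subseteq> E" using P2 pe_append_cons[of a2 v b2] by (auto simp: od_paths_def)
  have ew: "path_edges w \<subseteq> E" using e1 e2 pe_append_cons[of a1 v b2] by (auto simp: w_def)
  have "s \<in> od_paths E vo vd" using s hdw lastw ew by (auto simp: od_paths_def)
  then have "\<mu> \<le> W h s" using Pmin by blast
  also have "\<dots> \<le> W h w" using W_mono[OF hnn ew s(5)] .
  also have "\<dots> \<le> W h (a1 @ [v]) + W h (v # b2)"
    unfolding W_def w_def pe_append_cons[of a1 v b2]
    using W_un_le[OF hnn e1 e2] by (simp add: pe_finite)
  finally have "\<mu> \<le> W h (a1 @ [v]) + W h (v # b2)" .
  moreover have "W h (a2 @ v # b2) = \<mu>" using Umin p2 by blast
  moreover have "W h (a2 @ v # b2) = W h (a2 @ [v]) + W h (v # b2)"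
    using P2 by (intro W_split) (auto simp: od_paths_def)
  ultimately show ?thesis by linarith
qed

lemma tight:
  assumes hnn: "\<forall>e\<in>E. h e \<ge> 0"
    and U: "U \<subseteq> od_paths E vo vd" and Une: "U \<noteq> {}" and Umin: "\<forall>p\<in>U. W h p = \<mu>"
    and Pmin: "\<forall>r\<in>od_paths E vo vd. \<mu> \<le> W h r"
    and r: "r \<in> od_paths E vo vd"
    and cov: "\<forall>e\<in>path_edges r. \<exists>p\<in>U. e \<in> path_edges p"
  shows "W h r = \<mu>"
proof -
  note cA = claimA[OF hnn U Umin Pmin]
  have rp: "r \<noteq> []" "hd r = vo" "last r = vd" "distinct r" using r by (auto simp: od_paths_def)
  have main: "\<And>d p a b. r = c @ d \<Longrightarrow> c \<noteq> [] \<Longrightarrow> p \<in> U \<Longrightarrow> p = a @ last c # b \<Longrightarrow> W h (a @ [last c]) = W h c" for c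
  proof (induction c rule: rev_induct)
    case Nil then show ?case by simp
  next
    case (snoc w c')
    show ?case
    proof (cases "c' = []")
      case True
      then have "w = vo" using snoc.prems(1) rp by simp
      have "a = []"
      proof (rule ccontr)
        assume "a \<noteq> []"
        then obtain x a' where "a = x # a'" by (cases a) auto
        moreover have "p \<in> od_paths E vo vd" using snoc.prems(3) U by auto
        ultimately show False using snoc.prems(4) \<open>w = vo\<close> True by (auto simp: od_paths_def)
      qed
      then show ?thesis using True by (simp add: W_def)
    next
      case False
      then obtain c'' v where c': "c' = c'' @ [v]" by (cases c' rule: rev_cases) auto
      have "(v,w) \<in> path_edges r"
        using snoc.prems(1) c' pe_append_cons[of c'' v "w # d"] by (auto simp: path_edges_def)
      then obtain p' where p': "p' \<in> U" "(v,w) \<in> path_edges p'" using cov by blast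
      obtain a' b' where p'd: "p' = a' @ v # w # b'" using pe_decomp[OF p'(2)] by blast
      have IH: "W h (a' @ [v]) = W h c'"
        using snoc.IH[of "w # d" p' a' "w # b'"] snoc.prems(1) p' p'd c' by simp
      have dp': "distinct p'" using p'(1) U by (auto simp: od_paths_def)
      have "W h (a' @ [v, w]) = W h (a' @ [v]) + h (v,w)"
        using dp' p'd by (intro W_snoc) auto
      moreover have "W h (c'' @ [v, w]) = W h (c'' @ [v]) + h (v,w)"
        using rp(4) snoc.prems(1) c' by (intro W_snoc) auto
      moreover have "W h (a @ [w]) = W h ((a' @ [v]) @ [w])"
      proof -
        have q1: "(a' @ [v]) @ w # b' \<in> U" using p'(1) p'd by simp
        have q2: "a @ w # b \<in> U" using snoc.prems(3,4) by simp
        show ?thesis using cA[OF q1 q2] cA[OF q2 q1] by linarith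
      qed
      ultimately show ?thesis using IH c' by simp
    qed
  qed
  obtain p where p: "p \<in> U" using Une by blast
  then have pp: "p \<noteq> []" "last p = vd" using U by (auto simp: od_paths_def)
  then have pd: "p = butlast p @ last r # []" using rp by (metis append_butlast_last_id)
  have "W h (butlast p @ [last r]) = W h r" by (rule main[where d="[]" and b="[]"]) (use rp p pd in auto)
  moreover have "W h (butlast p @ [last r]) = \<mu>" using Umin p pd by metis
  ultimately show ?thesis by simp
qed

lemma swap_sum:
  fixes g :: "'v list \<Rightarrow> real" and k :: "('v\<times>'v) \<Rightarrow> real"
  assumes "finite P" "finite E" "\<forall>p\<in>P. path_edges p \<subseteq> E"
  shows "(\<Sum>p\<in>P. g p * (\<Sum>e\<in>path_edges p. k e)) = (\<Sum>e\<in>E. k e * edge_flow P g e)"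
proof -
  have "(\<Sum>p\<in>P. g p * (\<Sum>e\<in>path_edges p. k e)) = (\<Sum>p\<in>P. \<Sum>e\<in>{e. e \<in> E \<and> e \<in> path_edges p}. g p * k e)"
  proof (rule sum.cong[OF refl])
    fix p assume "p \<in> P"
    then have "{e. e \<in> E \<and> e \<in> path_edges p} = path_edges p" using assms(3) by auto
    then show "g p * (\<Sum>e\<in>path_edges p. k e) = (\<Sum>e\<in>{e. e \<in> E \<and> e \<in> path_edges p}. g p * k e)"
      by (simp add: sum_distrib_left)
  qed
  also have "\<dots> = (\<Sum>e\<in>E. \<Sum>p\<in>{p. p \<in> P \<and> e \<in> path_edges p}. g p * k e)"
    by (rule sum.swap_restrict[OF assms(1,2)])
  also have "\<dots> = (\<Sum>e\<in>E. k e * edge_flow P g e)"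
    unfolding edge_flow_def by (simp add: sum_distrib_left sum_distrib_right mult.commute)
  finally show ?thesis .
qed

lemma exp_cost_edges:
  "exp_cost C m P \<phi> f p = (\<Sum>e\<in>path_edges p. (\<Sum>s<m. \<phi> s * C s e (edge_flow P f e)))"
  unfolding exp_cost_def path_cost_def by (simp add: sum_distrib_left sum.swap[of _ "{..<m}"])

lemma ef_bounds:
  assumes "feasible_flow P f" "finite P"
  shows "0 \<le> edge_flow P f e" "edge_flow P f e \<le> 1"
proof -
  have nn: "\<forall>p\<in>P. f p \<ge> 0" and s1: "sum f P = 1" using assms(1) by (auto simp: feasible_flow_def)
  show "0 \<le> edge_flow P f e" unfolding edge_flow_def using nn by (intro sum_nonneg) auto
  have "edge_flow P f e \<le> sum f P" unfolding edge_flow_def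
    using nn assms(2) by (intro sum_mono2) auto
  then show "edge_flow P f e \<le> 1" using s1 by simp
qed

lemma wardrop_min:
  assumes "f \<in> wardrop C m P \<phi>" "finite P"
  obtains \<mu> where "\<forall>p\<in>P. f p > 0 \<longrightarrow> exp_cost C m P \<phi> f p = \<mu>" "\<forall>r\<in>P. \<mu> \<le> exp_cost C m P \<phi> f r"
    "\<exists>p\<in>P. f p > 0"
proof -
  have nn: "\<forall>p\<in>P. f p \<ge> 0" and s1: "sum f P = 1" and we:
    "\<forall>p\<in>P. f p > 0 \<longrightarrow> (\<forall>r\<in>P. exp_cost C m P \<phi> f p \<le> exp_cost C m P \<phi> f r)"
    using assms(1) by (auto simp: feasible_flow_def wardrop_def)
  have "\<exists>p\<in>P. f p > 0"
  proof (rule ccontr)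
    assume "\<not> ?thesis"
    then have "\<forall>p\<in>P. f p = 0" using nn by force
    then have "sum f P = 0" by simp
    with s1 show False by simp
  qed
  then obtain p0 where p0: "p0 \<in> P" "f p0 > 0" by blast
  show ?thesis
  proof (rule that[of "exp_cost C m P \<phi> f p0"])
    show "\<forall>p\<in>P. f p > 0 \<longrightarrow> exp_cost C m P \<phi> f p = exp_cost C m P \<phi> f p0"
      using we p0 by (meson order_antisym)
    show "\<forall>r\<in>P. exp_cost C m P \<phi> f p0 \<le> exp_cost C m P \<phi> f r" using we p0 by blast
  qed (use p0 in blast)
qed

lemma VI:
  assumes f: "f \<in> wardrop C m P \<phi>" and g: "feasible_flow P g"
    and fin: "finite P" "finite E" and sub: "\<forall>p\<in>P. path_edges p \<subseteq> E"
  shows "(\<Sum>e\<in>E. (\<Sum>s<m. \<phi> s * C s e (edge_flow P f e)) * (edge_flow P g e - edge_flow P f e)) \<ge> 0"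
proof -
  define K where "K p = exp_cost C m P \<phi> f p" for p
  obtain \<mu> where mu1: "\<forall>p\<in>P. f p > 0 \<longrightarrow> K p = \<mu>" and mu2: "\<forall>r\<in>P. \<mu> \<le> K r"
    using wardrop_min[OF f fin(1)] unfolding K_def by metis
  have fnn: "\<forall>p\<in>P. f p \<ge> 0" and fs: "sum f P = 1" using f by (auto simp: feasible_flow_def wardrop_def)
  have gnn: "\<forall>p\<in>P. g p \<ge> 0" and gs: "sum g P = 1" using g by (auto simp: feasible_flow_def)
  have "(\<Sum>p\<in>P. f p * K p) = (\<Sum>p\<in>P. f p * \<mu>)"
  proof (rule sum.cong[OF refl])
    fix p assume "p \<in> P" then show "f p * K p = f p * \<mu>" using mu1 fnn by (cases "f p > 0") auto
  qed
  also have "\<dots> = \<mu>" using fs by (simp add: sum_distrib_right[symmetric])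
  finally have A: "(\<Sum>p\<in>P. f p * K p) = \<mu>" .
  have "(\<Sum>p\<in>P. g p * K p) \<ge> (\<Sum>p\<in>P. g p * \<mu>)"
    using mu2 gnn by (intro sum_mono mult_left_mono) auto
  moreover have "(\<Sum>p\<in>P. g p * \<mu>) = \<mu>" using gs by (simp add: sum_distrib_right[symmetric])
  ultimately have B: "(\<Sum>p\<in>P. g p * K p) \<ge> \<mu>" by simp
  define k where "k e = (\<Sum>s<m. \<phi> s * C s e (edge_flow P f e))" for e
  have Kk: "K p = (\<Sum>e\<in>path_edges p. k e)" for p unfolding K_def k_def by (rule exp_cost_edges)
  have "(\<Sum>p\<in>P. g p * K p) = (\<Sum>e\<in>E. k e * edge_flow P g e)"
    unfolding Kk by (rule swap_sum[OF fin sub])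
  moreover have "(\<Sum>p\<in>P. f p * K p) = (\<Sum>e\<in>E. k e * edge_flow P f e)"
    unfolding Kk by (rule swap_sum[OF fin sub])
  ultimately have "(\<Sum>e\<in>E. k e * edge_flow P g e) - (\<Sum>e\<in>E. k e * edge_flow P f e) \<ge> 0"
    using A B by linarith
  then show ?thesis unfolding k_def by (simp add: sum_subtractf[symmetric] right_diff_distrib)
qed

lemma C_mono:
  assumes "strict_mono_on {0..} (g::real\<Rightarrow>real)" "0 \<le> x" "x \<le> y"
  shows "g x \<le> g y"
proof (cases "x = y")
  case False then have "x < y" using assms by simp
  have "g x < g y" by (rule strict_mono_onD[OF assms(1)]) (use assms \<open>x < y\<close> in auto)
  then show ?thesis by simp
qed simp

lemma ef_conv:
  fixes \<phi> :: "nat \<Rightarrow> real" and \<phi>n :: "nat \<Rightarrow> nat \<Rightarrow> real"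
  assumes fin: "finite P" "finite E" and sub: "\<forall>p\<in>P. path_edges p \<subseteq> E"
    and cost: "\<forall>s<m. \<forall>e\<in>E. strict_mono_on {0..} (C s e) \<and> (\<forall>x\<ge>0. C s e x \<ge> 0)"
    and phinn: "\<forall>s<m. \<phi> s \<ge> 0" and phipos: "\<exists>s<m. \<phi> s > 0"
    and lim: "\<forall>s<m. (\<lambda>n. \<phi>n n s) \<longlonglongrightarrow> \<phi> s"
    and f: "f \<in> wardrop C m P \<phi>" and fn: "\<forall>n. fn n \<in> wardrop C m P (\<phi>n n)"
    and e: "e \<in> E"
  shows "(\<lambda>n. edge_flow P (fn n) e) \<longlonglongrightarrow> edge_flow P f e"
proof -
  define x where "x e = edge_flow P f e" for e
  define y where "y n e = edge_flow P (fn n) e" for n e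
  define c where "c e t = (\<Sum>s<m. \<phi> s * C s e t)" for e t
  define cn where "cn n e t = (\<Sum>s<m. \<phi>n n s * C s e t)" for n e t
  define T where "T n e = (c e (y n e) - c e (x e)) * (y n e - x e)" for n e
  define \<rho> where "\<rho> n = (\<Sum>e\<in>E. \<Sum>s<m. \<bar>\<phi> s - \<phi>n n s\<bar> * C s e 1)" for n
  have ff: "feasible_flow P f" using f by (simp add: wardrop_def)
  have ffn: "feasible_flow P (fn n)" for n using fn by (simp add: wardrop_def)
  have x01: "0 \<le> x e" "x e \<le> 1" for e using ef_bounds[OF ff fin(1)] x_def by auto
  have y01: "0 \<le> y n e" "y n e \<le> 1" for n e using ef_bounds[OF ffn fin(1)] y_def by auto
  have cmono: "c e u \<le> c e v" if "e \<in> E" "0 \<le> u" "u \<le> v" for e u v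
    unfolding c_def using that cost phinn C_mono
    by (intro sum_mono mult_left_mono) auto
  have cstrict: "c e u < c e v" if "e \<in> E" "0 \<le> u" "u < v" for e u v
  proof -
    obtain s0 where s0: "s0 < m" "\<phi> s0 > 0" using phipos by blast
    have "0 < (\<Sum>s<m. \<phi> s * (C s e v - C s e u))"
    proof (rule sum_pos2[of _ s0])
      show "0 < \<phi> s0 * (C s0 e v - C s0 e u)" using s0 cost that strict_mono_onD[of "{0..}" "C s0 e" u v] by auto
      show "0 \<le> \<phi> i * (C i e v - C i e u)" if "i \<in> {..<m}" for i
        using that \<open>e \<in> E\<close> \<open>0 \<le> u\<close> \<open>u < v\<close> cost phinn C_mono[of "C i e" u v] by auto
    qed (use s0 in auto)
    then show ?thesis unfolding c_def by (simp add: sum_subtractf right_diff_distrib)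
  qed
  have Tnn: "T n e \<ge> 0" if "e \<in> E" for n e
  proof (cases "y n e \<ge> x e")
    case True then show ?thesis unfolding T_def using cmono[OF that x01(1) True] by simp
  next
    case False then show ?thesis unfolding T_def using cmono[OF that y01(1)[of n e], of "x e"]
      by (simp add: mult_nonpos_nonpos)
  qed
  have Tle: "(\<Sum>e\<in>E. T n e) \<le> \<rho> n" for n
  proof -
    have VI1: "(\<Sum>e\<in>E. c e (x e) * (y n e - x e)) \<ge> 0"
      using VI[OF f ffn fin sub] unfolding c_def x_def y_def .
    have VI2: "(\<Sum>e\<in>E. cn n e (y n e) * (x e - y n e)) \<ge> 0"
      using VI[OF fn[rule_format] ff fin sub] unfolding cn_def x_def y_def .
    have "(\<Sum>e\<in>E. T n e) = (\<Sum>e\<in>E. (c e (y n e) - cn n e (y n e)) * (y n e - x e))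
       - (\<Sum>e\<in>E. c e (x e) * (y n e - x e)) - (\<Sum>e\<in>E. cn n e (y n e) * (x e - y n e))"
      unfolding T_def by (simp add: sum_subtractf[symmetric] algebra_simps)
    also have "\<dots> \<le> (\<Sum>e\<in>E. (c e (y n e) - cn n e (y n e)) * (y n e - x e))"
      using VI1 VI2 by linarith
    also have "\<dots> \<le> \<rho> n" unfolding \<rho>_def
    proof (rule sum_mono)
      fix e assume eE: "e \<in> E"
      have "(c e (y n e) - cn n e (y n e)) * (y n e - x e) \<le> \<bar>c e (y n e) - cn n e (y n e)\<bar> * \<bar>y n e - x e\<bar>"
        by (metis abs_ge_self abs_mult)
      also have "\<dots> \<le> \<bar>c e (y n e) - cn n e (y n e)\<bar>"
        using x01[of e] y01[of n e] by (intro mult_left_le) auto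
      also have "\<bar>c e (y n e) - cn n e (y n e)\<bar> = \<bar>\<Sum>s<m. (\<phi> s - \<phi>n n s) * C s e (y n e)\<bar>"
        unfolding c_def cn_def by (simp add: sum_subtractf[symmetric] left_diff_distrib)
      also have "\<dots> \<le> (\<Sum>s<m. \<bar>(\<phi> s - \<phi>n n s) * C s e (y n e)\<bar>)" by (rule sum_abs)
      also have "\<dots> \<le> (\<Sum>s<m. \<bar>\<phi> s - \<phi>n n s\<bar> * C s e 1)"
      proof (rule sum_mono)
        fix s assume "s \<in> {..<m}"
        then have "0 \<le> C s e (y n e)" "C s e (y n e) \<le> C s e 1"
          using cost eE y01[of n e] C_mono[of "C s e" "y n e" 1] by auto
        then show "\<bar>(\<phi> s - \<phi>n n s) * C s e (y n e)\<bar> \<le> \<bar>\<phi> s - \<phi>n n s\<bar> * C s e 1"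
          by (simp add: abs_mult mult_left_mono)
      qed
      finally show "(c e (y n e) - cn n e (y n e)) * (y n e - x e) \<le> (\<Sum>s<m. \<bar>\<phi> s - \<phi>n n s\<bar> * C s e 1)" .
    qed
    finally show ?thesis .
  qed
  have Tle1: "T n e \<le> \<rho> n" for n
    using Tle[of n] member_le_sum[of e E "T n", OF e] Tnn fin(2) by fastforce
  have \<rho>lim: "\<rho> \<longlonglongrightarrow> 0"
  proof -
    have "\<rho> \<longlonglongrightarrow> (\<Sum>e\<in>E. \<Sum>s<m. \<bar>\<phi> s - \<phi> s\<bar> * C s e 1)"
      unfolding \<rho>_def using lim by (intro tendsto_intros) auto
    then show ?thesis by simp
  qed
  show ?thesis unfolding LIMSEQ_iff
  proof (intro allI impI)
    fix \<epsilon> :: real assume \<epsilon>: "\<epsilon> > 0"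
    define a where "a = c e (x e + \<epsilon>) - c e (x e)"
    define b where "b = (if x e \<ge> \<epsilon> then c e (x e) - c e (x e - \<epsilon>) else 1)"
    have a: "a > 0" unfolding a_def using cstrict[OF e x01(1)[of e], of "x e + \<epsilon>"] \<epsilon> by simp
    have b: "b > 0" unfolding b_def using cstrict[OF e, of "x e - \<epsilon>" "x e"] \<epsilon> by auto
    have "\<epsilon> * min a b > 0" using a b \<epsilon> by simp
    then obtain N where N: "\<forall>n\<ge>N. norm (\<rho> n - 0) < \<epsilon> * min a b"
      using \<rho>lim unfolding LIMSEQ_iff by blast
    show "\<exists>no. \<forall>n\<ge>no. norm (edge_flow P (fn n) e - edge_flow P f e) < \<epsilon>"
    proof (intro exI allI impI)
      fix n assume "n \<ge> N"
      then have "\<bar>\<rho> n\<bar> < \<epsilon> * min a b" using N by simp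
      then have r: "T n e < \<epsilon> * min a b" using Tle1[of n] by linarith
      have "\<bar>y n e - x e\<bar> < \<epsilon>"
      proof (rule ccontr)
        assume "\<not> ?thesis"
        then consider "y n e \<ge> x e + \<epsilon>" | "y n e \<le> x e - \<epsilon>" by linarith
        then show False
        proof cases
          case 1
          have "c e (x e + \<epsilon>) \<le> c e (y n e)" by (rule cmono[OF e]) (use x01(1)[of e] \<epsilon> 1 in auto)
          then have "c e (y n e) - c e (x e) \<ge> a" unfolding a_def by simp
          then have "T n e \<ge> a * \<epsilon>" unfolding T_def using 1 a \<epsilon>
            by (intro mult_mono) auto
          moreover have "a * \<epsilon> \<ge> \<epsilon> * min a b" using \<epsilon> by (simp add: mult.commute mult_left_mono)
          ultimately show False using r by linarith
        next
          case 2
          then have xe: "x e \<ge> \<epsilon>" using y01(1)[of n e] by linarith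
          have "c e (y n e) \<le> c e (x e - \<epsilon>)" by (rule cmono[OF e]) (use y01(1)[of n e] 2 in auto)
          then have "c e (x e) - c e (y n e) \<ge> b" unfolding b_def using xe by simp
          then have "T n e \<ge> b * \<epsilon>" unfolding T_def using 2 b \<epsilon>
            by (smt (verit, ccfv_SIG) mult_mono mult_minus_left mult_minus_right minus_diff_eq)
          moreover have "b * \<epsilon> \<ge> \<epsilon> * min a b" using \<epsilon> by (simp add: mult.commute mult_left_mono)
          ultimately show False using r by linarith
        qed
      qed
      then show "norm (edge_flow P (fn n) e - edge_flow P f e) < \<epsilon>" unfolding x_def y_def by simp
    qed
  qed
qed

lemma cdiff_W:
  "cdiff C m P \<Phi> F u p r \<psi> =
     W (\<lambda>e. \<Sum>s<m. \<Phi> u s * C s e (edge_flow P (F u) e) * \<psi> s) p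
   - W (\<lambda>e. \<Sum>s<m. \<Phi> u s * C s e (edge_flow P (F u) e) * \<psi> s) r"
proof -
  have *: "W (\<lambda>e. \<Sum>s<m. \<Phi> u s * C s e (edge_flow P (F u) e) * \<psi> s) p
      = (\<Sum>s<m. \<Phi> u s * path_cost C P s (F u) p * \<psi> s)" for p
  proof -
    have "W (\<lambda>e. \<Sum>s<m. \<Phi> u s * C s e (edge_flow P (F u) e) * \<psi> s) p
       = (\<Sum>s<m. \<Sum>e\<in>path_edges p. \<Phi> u s * C s e (edge_flow P (F u) e) * \<psi> s)"
      unfolding W_def by (rule sum.swap)
    also have "\<dots> = (\<Sum>s<m. \<Phi> u s * path_cost C P s (F u) p * \<psi> s)"
      unfolding path_cost_def by (simp add: sum_distrib_left sum_distrib_right)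
    finally show ?thesis .
  qed
  show ?thesis unfolding * cdiff_def
    by (simp add: sum_subtractf[symmetric] right_diff_distrib left_diff_distrib)
qed

lemma bw:
  fixes X :: "nat \<Rightarrow> nat \<Rightarrow> real"
  assumes "\<forall>k s. \<bar>X k s\<bar> \<le> B"
  shows "\<exists>r l. strict_mono r \<and> (\<forall>s<m. (\<lambda>k. X (r k) s) \<longlonglongrightarrow> l s)"
proof (induction m)
  case 0
  show ?case by (rule exI[of _ id], rule exI[of _ "\<lambda>_. 0"]) (auto simp: strict_mono_def)
next
  case (Suc m)
  then obtain r l where r: "strict_mono r" "\<forall>s<m. (\<lambda>k. X (r k) s) \<longlonglongrightarrow> l s" by blast
  obtain f where f: "strict_mono f" "monoseq (\<lambda>k. X (r (f k)) m)" using seq_monosub[of "\<lambda>k. X (r k) m"] by blast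
  have "Bseq (\<lambda>k. X (r (f k)) m)" using assms by (intro BseqI'[of _ B]) auto
  then have "convergent (\<lambda>k. X (r (f k)) m)" using f(2) Bseq_monoseq_convergent by blast
  then obtain L where L: "(\<lambda>k. X (r (f k)) m) \<longlonglongrightarrow> L" by (auto simp: convergent_def)
  show ?case
  proof (intro exI conjI allI impI)
    show "strict_mono (r \<circ> f)" using r(1) f(1) by (rule strict_mono_o)
    fix s assume "s < Suc m"
    show "(\<lambda>k. X ((r \<circ> f) k) s) \<longlonglongrightarrow> (l(m := L)) s"
    proof (cases "s = m")
      case True then show ?thesis using L by simp
    next
      case False
      then have "s < m" using \<open>s < Suc m\<close> by simp
      then have "((\<lambda>k. X (r k) s) \<circ> f) \<longlonglongrightarrow> l s" using r(2) f(1) LIMSEQ_subseq_LIMSEQ by blast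
      then show ?thesis using False by (simp add: comp_def)
    qed
  qed
qed

lemma cdiff_lin:
  "cdiff C m P \<Phi> G u p r (\<lambda>s. a * \<psi> s + b * \<psi>' s) = a * cdiff C m P \<Phi> G u p r \<psi> + b * cdiff C m P \<Phi> G u p r \<psi>'"
  unfolding cdiff_def sum_distrib_left sum.distrib[symmetric] by (rule sum.cong) (simp_all add: algebra_simps)

lemma qh_in:
  assumes fin: "finite P" and qh: "qh \<in> simplex m"
    and G: "\<forall>u<z. G u \<in> wardrop C m P (posterior m \<Phi> qh u)"
    and Nh: "\<forall>u<z. (\<Sum>l<m. \<Phi> u l * qh l) > 0"
  shows "qh \<in> Q_Phi C m z P \<Phi> G"
proof -
  have main: "cdiff C m P \<Phi> G u p r qh = (\<Sum>l<m. \<Phi> u l * qh l) *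
      (exp_cost C m P (posterior m \<Phi> qh u) (G u) p - exp_cost C m P (posterior m \<Phi> qh u) (G u) r)"
    if "u < z" for u p r
  proof -
    define N where "N = (\<Sum>l<m. \<Phi> u l * qh l)"
    have N0: "N \<noteq> 0" using Nh that N_def by fastforce
    have e: "N * exp_cost C m P (posterior m \<Phi> qh u) (G u) p = (\<Sum>s<m. \<Phi> u s * path_cost C P s (G u) p * qh s)" for p
    proof -
      have "N * exp_cost C m P (posterior m \<Phi> qh u) (G u) p = (\<Sum>s<m. N * (\<Phi> u s * qh s / N * path_cost C P s (G u) p))"
        unfolding exp_cost_def posterior_def N_def[symmetric] by (simp add: sum_distrib_left)
      also have "\<dots> = (\<Sum>s<m. \<Phi> u s * path_cost C P s (G u) p * qh s)"
        using N0 by (intro sum.cong) (auto simp: field_simps)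
      finally show ?thesis .
    qed
    show ?thesis unfolding N_def[symmetric] right_diff_distrib e cdiff_def
      by (simp add: sum_subtractf[symmetric] algebra_simps)
  qed
  show ?thesis unfolding Q_Phi_def
  proof (intro CollectI conjI qh allI impI ballI)
    fix u p r assume u: "u < z" and p: "p \<in> P" and r: "r \<in> P" and pp: "0 < G u p"
    have we: "\<forall>p\<in>P. G u p > 0 \<longrightarrow> (\<forall>r\<in>P. exp_cost C m P (posterior m \<Phi> qh u) (G u) p \<le> exp_cost C m P (posterior m \<Phi> qh u) (G u) r)"
      using G u by (auto simp: wardrop_def)
    have Np: "(\<Sum>l<m. \<Phi> u l * qh l) > 0" using Nh u by blast
    have le: "exp_cost C m P (posterior m \<Phi> qh u) (G u) p \<le> exp_cost C m P (posterior m \<Phi> qh u) (G u) r"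
      using we p r pp by blast
    show "cdiff C m P \<Phi> G u p r qh \<le> 0" if "G u r = 0"
      unfolding main[OF u] using Np le by (simp add: mult_nonneg_nonpos)
    show "cdiff C m P \<Phi> G u p r qh = 0" if "0 < G u r"
    proof -
      have "exp_cost C m P (posterior m \<Phi> qh u) (G u) r \<le> exp_cost C m P (posterior m \<Phi> qh u) (G u) p"
        using we p r that by blast
      then show ?thesis unfolding main[OF u] using le by simp
    qed
  qed
qed

lemma tight_app:
  assumes finE: "finite E"
    and cost: "\<forall>s<m. \<forall>e\<in>E. (\<forall>x\<ge>0. C s e x \<ge> 0)"
    and scheme: "\<forall>u<z. \<forall>s<m. \<Phi> u s \<ge> 0"
    and psi: "\<psi> \<in> Q_Phi C m z (od_paths E vo vd) \<Phi> G"
    and u: "u < z"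
    and Gw: "G u \<in> wardrop C m (od_paths E vo vd) \<phi>"
    and Ff: "feasible_flow (od_paths E vo vd) f"
    and cov: "\<forall>e\<in>E. edge_flow (od_paths E vo vd) f e > 0 \<longrightarrow> edge_flow (od_paths E vo vd) (G u) e > 0"
    and p: "p \<in> od_paths E vo vd" "f p > 0" and r: "r \<in> od_paths E vo vd" "f r > 0"
  shows "cdiff C m (od_paths E vo vd) \<Phi> G u p r \<psi> = 0"
proof -
  let ?P = "od_paths E vo vd"
  have finP: "finite ?P" using finite_od_paths[OF finE] .
  have subP: "\<forall>p\<in>?P. path_edges p \<subseteq> E" by (auto simp: od_paths_def)
  define h where "h e = (\<Sum>s<m. \<Phi> u s * C s e (edge_flow ?P (G u) e) * \<psi> s)" for e
  have cW: "cdiff C m ?P \<Phi> G u a b \<psi> = W h a - W h b" for a b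
    unfolding h_def by (rule cdiff_W)
  have Gf: "feasible_flow ?P (G u)" using Gw by (simp add: wardrop_def)
  have psis: "\<psi> \<in> simplex m" and psiQ: "\<forall>u<z. \<forall>p\<in>?P. \<forall>r\<in>?P. G u p > 0 \<longrightarrow>
      ((G u r > 0 \<longrightarrow> cdiff C m ?P \<Phi> G u p r \<psi> = 0) \<and> (G u r = 0 \<longrightarrow> cdiff C m ?P \<Phi> G u p r \<psi> \<le> 0))"
    using psi by (auto simp: Q_Phi_def)
  have hnn: "\<forall>e\<in>E. h e \<ge> 0"
  proof
    fix e assume e: "e \<in> E"
    have "0 \<le> edge_flow ?P (G u) e" using ef_bounds[OF Gf finP] by blast
    then show "h e \<ge> 0" unfolding h_def using cost scheme u e psis
      by (intro sum_nonneg) (auto simp: simplex_def)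
  qed
  define U where "U = {p\<in>?P. G u p > 0}"
  obtain p0 where p0: "p0 \<in> ?P" "G u p0 > 0" using wardrop_min[OF Gw finP] by metis
  have Gnn: "\<forall>p\<in>?P. G u p \<ge> 0" using Gf by (simp add: feasible_flow_def)
  have Umin: "\<forall>p\<in>U. W h p = W h p0"
  proof
    fix p assume "p \<in> U"
    then have "cdiff C m ?P \<Phi> G u p0 p \<psi> = 0" using psiQ u p0 unfolding U_def by blast
    then show "W h p = W h p0" unfolding cW by simp
  qed
  have Pmin: "\<forall>r\<in>?P. W h p0 \<le> W h r"
  proof
    fix r assume r: "r \<in> ?P"
    have "cdiff C m ?P \<Phi> G u p0 r \<psi> \<le> 0"
    proof (cases "G u r > 0")
      case True then show ?thesis using psiQ u p0 r by fastforce
    next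
      case False then have "G u r = 0" using Gnn r by force
      then show ?thesis using psiQ u p0 r by blast
    qed
    then show "W h p0 \<le> W h r" unfolding cW by simp
  qed
  have covp: "\<forall>e\<in>path_edges a. \<exists>p\<in>U. e \<in> path_edges p" if a: "a \<in> ?P" "f a > 0" for a
  proof
    fix e assume ea: "e \<in> path_edges a"
    then have eE: "e \<in> E" using subP a by blast
    have fnn: "\<forall>p\<in>?P. f p \<ge> 0" using Ff by (simp add: feasible_flow_def)
    have "f a \<le> edge_flow ?P f e" unfolding edge_flow_def
      by (rule member_le_sum) (use a ea fnn finP in auto)
    then have "edge_flow ?P (G u) e > 0" using cov eE a by fastforce
    then have "\<not> (\<forall>p\<in>{p\<in>?P. e \<in> path_edges p}. G u p = 0)" unfolding edge_flow_def by force
    then obtain p' where "p' \<in> ?P" "e \<in> path_edges p'" "G u p' \<noteq> 0" by blast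
    then show "\<exists>p\<in>U. e \<in> path_edges p" unfolding U_def using Gnn by force
  qed
  have UP: "U \<subseteq> ?P" and Une: "U \<noteq> {}" using p0 unfolding U_def by auto
  have "W h p = W h p0" by (rule tight[OF hnn UP Une Umin Pmin p(1) covp[OF p]])
  moreover have "W h r = W h p0" by (rule tight[OF hnn UP Une Umin Pmin r(1) covp[OF r]])
  ultimately show ?thesis unfolding cW by simp
qed

lemma key_step:
  assumes finE: "finite E"
    and cost: "\<forall>s<m. \<forall>e\<in>E. (\<forall>x\<ge>0. C s e x \<ge> 0)"
    and scheme: "\<forall>u<z. \<forall>s<m. \<Phi> u s \<ge> 0"
    and qh: "qh \<in> simplex m"
    and G: "\<forall>u<z. G u \<in> wardrop C m (od_paths E vo vd) (posterior m \<Phi> qh u)"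
    and Nh: "\<forall>u<z. (\<Sum>l<m. \<Phi> u l * qh l) > 0"
    and QP: "Q_Phi C m z (od_paths E vo vd) \<Phi> G \<noteq> {qh}"
    and Ff: "\<forall>u<z. feasible_flow (od_paths E vo vd) (F u)"
    and cov: "\<forall>u<z. \<forall>e\<in>E. edge_flow (od_paths E vo vd) (F u) e > 0 \<longrightarrow> edge_flow (od_paths E vo vd) (G u) e > 0"
  shows "\<exists>x. (\<Sum>s<m. \<bar>x s\<bar>) = 1 \<and> (\<Sum>s<m. x s) = 0 \<and>
    (\<forall>u<z. \<forall>p\<in>od_paths E vo vd. \<forall>r\<in>od_paths E vo vd. F u p > 0 \<longrightarrow> F u r > 0 \<longrightarrow>
        cdiff C m (od_paths E vo vd) \<Phi> G u p r x = 0)"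
proof -
  let ?P = "od_paths E vo vd"
  have finP: "finite ?P" using finite_od_paths[OF finE] .
  have qin: "qh \<in> Q_Phi C m z ?P \<Phi> G" by (rule qh_in[OF finP qh G Nh])
  have "\<exists>\<psi>. \<psi> \<in> Q_Phi C m z ?P \<Phi> G \<and> \<psi> \<noteq> qh"
  proof (rule ccontr)
    assume "\<not> ?thesis"
    then have "Q_Phi C m z ?P \<Phi> G \<subseteq> {qh}" by blast
    with qin have "Q_Phi C m z ?P \<Phi> G = {qh}" by blast
    with QP show False by contradiction
  qed
  then obtain \<psi> where psi: "\<psi> \<in> Q_Phi C m z ?P \<Phi> G" "\<psi> \<noteq> qh" by blast
  have psis: "\<psi> \<in> simplex m" using psi by (simp add: Q_Phi_def)
  have "\<exists>s<m. \<psi> s \<noteq> qh s"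
  proof (rule ccontr)
    assume "\<not> ?thesis"
    then have "\<psi> s = qh s" for s using psis qh by (cases "s < m") (auto simp: simplex_def)
    then show False using psi(2) by auto
  qed
  then obtain s0 where s0: "s0 < m" "\<psi> s0 \<noteq> qh s0" by blast
  define M where "M = (\<Sum>s<m. \<bar>\<psi> s - qh s\<bar>)"
  have "\<bar>\<psi> s0 - qh s0\<bar> \<le> M" unfolding M_def by (rule member_le_sum) (use s0 in auto)
  then have M: "M > 0" using s0 by linarith
  define x where "x s = (1/M) * \<psi> s + (-1/M) * qh s" for s
  have xd: "x s = (\<psi> s - qh s) / M" for s unfolding x_def by (simp add: diff_divide_distrib)
  show ?thesis
  proof (intro exI conjI allI impI ballI)
    show "(\<Sum>s<m. \<bar>x s\<bar>) = 1" unfolding xd using M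
      by (simp add: sum_divide_distrib[symmetric] M_def)
    have "(\<Sum>s<m. \<psi> s) = 1" "(\<Sum>s<m. qh s) = 1" using psis qh by (auto simp: simplex_def)
    then show "(\<Sum>s<m. x s) = 0" unfolding xd
      by (simp add: sum_divide_distrib[symmetric] sum_subtractf)
    fix u p r assume u: "u < z" and p: "p \<in> ?P" and r: "r \<in> ?P" and fp: "F u p > 0" and fr: "F u r > 0"
    have Gw: "G u \<in> wardrop C m ?P (posterior m \<Phi> qh u)" using G u by blast
    have a: "cdiff C m ?P \<Phi> G u p r \<psi> = 0"
      by (rule tight_app[OF finE cost scheme psi(1) u Gw _ _ p fp r fr]) (use Ff cov u in auto)
    have b: "cdiff C m ?P \<Phi> G u p r qh = 0"
      by (rule tight_app[OF finE cost scheme qin u Gw _ _ p fp r fr]) (use Ff cov u in auto)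
    show "cdiff C m ?P \<Phi> G u p r x = 0"
      unfolding x_def cdiff_lin a b by simp
  qed
qed

theorem lemma9:
  fixes E :: "('v \<times> 'v) set" and vo vd :: 'v and m z :: nat
    and C :: "nat \<Rightarrow> ('v \<times> 'v) \<Rightarrow> real \<Rightarrow> real"
    and \<Phi> :: "nat \<Rightarrow> nat \<Rightarrow> real" and q :: "nat \<Rightarrow> real"
    and F :: "nat \<Rightarrow> 'v list \<Rightarrow> real"
  assumes finE: "finite E"
    and cost: "\<forall>s<m. \<forall>e\<in>E. continuous_on {0..} (C s e) \<and> strict_mono_on {0..} (C s e)
                  \<and> (\<forall>x\<ge>0. C s e x \<ge> 0)"
    and q_simplex: "q \<in> simplex m" and q_pos: "\<forall>s<m. q s > 0"
    and scheme: "signalling_scheme z m \<Phi>"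
    and sig_pos: "\<forall>u<z. (\<Sum>l<m. \<Phi> u l * q l) > 0"
    and obs: "\<forall>u<z. F u \<in> wardrop C m (od_paths E vo vd) (posterior m \<Phi> q u)"
    and q_ident: "Q_Phi C m z (od_paths E vo vd) \<Phi> F = {q}"
    and Q_eq: "Q_eq_Phi C m z (od_paths E vo vd) \<Phi> F = {q}"
  shows "\<exists>\<delta>>0. \<forall>qh\<in>simplex m. sqrt (\<Sum>s<m. (q s - qh s)\<^sup>2) < \<delta> \<longrightarrow>
            identifying C m z (od_paths E vo vd) \<Phi> qh"
proof (rule ccontr)
  let ?P = "od_paths E vo vd"
  have finP: "finite ?P" using finite_od_paths[OF finE] .
  have subP: "\<forall>p\<in>?P. path_edges p \<subseteq> E" by (auto simp: od_paths_def)
  have Phinn: "\<forall>u<z. \<forall>s<m. \<Phi> u s \<ge> 0" using scheme by (simp add: signalling_scheme_def)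
  have costnn: "\<forall>s<m. \<forall>e\<in>E. (\<forall>x\<ge>0. C s e x \<ge> 0)" using cost by blast
  have costsm: "\<forall>s<m. \<forall>e\<in>E. strict_mono_on {0..} (C s e) \<and> (\<forall>x\<ge>0. C s e x \<ge> 0)" using cost by blast
  have Ff: "\<forall>u<z. feasible_flow ?P (F u)" using obs by (simp add: wardrop_def)
  assume neg: "\<not> (\<exists>\<delta>>0. \<forall>qh\<in>simplex m. sqrt (\<Sum>s<m. (q s - qh s)\<^sup>2) < \<delta> \<longrightarrow>
            identifying C m z ?P \<Phi> qh)"
  have "\<forall>n. \<exists>qh. qh \<in> simplex m \<and> sqrt (\<Sum>s<m. (q s - qh s)\<^sup>2) < inverse (real (Suc n)) \<and>
      \<not> identifying C m z ?P \<Phi> qh"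
  proof
    fix n :: nat
    have "inverse (real (Suc n)) > 0" by simp
    then show "\<exists>qh. qh \<in> simplex m \<and> sqrt (\<Sum>s<m. (q s - qh s)\<^sup>2) < inverse (real (Suc n)) \<and>
      \<not> identifying C m z ?P \<Phi> qh" using neg by blast
  qed
  then obtain Q where Q: "\<And>n. Q n \<in> simplex m" "\<And>n. sqrt (\<Sum>s<m. (q s - Q n s)\<^sup>2) < inverse (real (Suc n))"
    "\<And>n. \<not> identifying C m z ?P \<Phi> (Q n)" by metis
  have "\<forall>n. \<exists>G. (\<forall>u<z. G u \<in> wardrop C m ?P (posterior m \<Phi> (Q n) u)) \<and> Q_Phi C m z ?P \<Phi> G \<noteq> {Q n}"
    using Q(3) unfolding identifying_def by blast
  then obtain Gs where Gs: "\<And>n. \<forall>u<z. Gs n u \<in> wardrop C m ?P (posterior m \<Phi> (Q n) u)"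
    "\<And>n. Q_Phi C m z ?P \<Phi> (Gs n) \<noteq> {Q n}" by metis
  have Gf: "feasible_flow ?P (Gs n u)" if "u < z" for n u using Gs(1) that by (simp add: wardrop_def)
  have Qlim: "(\<lambda>n. Q n s) \<longlonglongrightarrow> q s" if s: "s < m" for s
    unfolding LIMSEQ_iff
  proof (intro allI impI)
    fix \<epsilon> :: real assume \<epsilon>: "\<epsilon> > 0"
    obtain N where N: "inverse (real (Suc N)) < \<epsilon>" using reals_Archimedean[OF \<epsilon>] by blast
    show "\<exists>no. \<forall>n\<ge>no. norm (Q n s - q s) < \<epsilon>"
    proof (intro exI allI impI)
      fix n assume n: "n \<ge> N"
      have "(q s - Q n s)\<^sup>2 \<le> (\<Sum>s<m. (q s - Q n s)\<^sup>2)"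
        by (rule member_le_sum) (use s in auto)
      then have "sqrt ((q s - Q n s)\<^sup>2) \<le> sqrt (\<Sum>s<m. (q s - Q n s)\<^sup>2)" by (rule real_sqrt_le_mono)
      then have "\<bar>q s - Q n s\<bar> < inverse (real (Suc n))" using Q(2)[of n] by simp
      moreover have "inverse (real (Suc n)) \<le> inverse (real (Suc N))" using n
        by (simp add: le_imp_inverse_le)
      ultimately have "\<bar>q s - Q n s\<bar> < \<epsilon>" using N by linarith
      then show "norm (Q n s - q s) < \<epsilon>" by (simp add: abs_minus_commute)
    qed
  qed
  have Nlim: "(\<lambda>n. \<Sum>l<m. \<Phi> u l * Q n l) \<longlonglongrightarrow> (\<Sum>l<m. \<Phi> u l * q l)" for u
    by (intro tendsto_sum tendsto_mult tendsto_const Qlim) simp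
  have postlim: "(\<lambda>n. posterior m \<Phi> (Q n) u s) \<longlonglongrightarrow> posterior m \<Phi> q u s" if "u < z" "s < m" for u s
  proof -
    have "(\<lambda>n. \<Phi> u s * Q n s / (\<Sum>l<m. \<Phi> u l * Q n l)) \<longlonglongrightarrow> \<Phi> u s * q s / (\<Sum>l<m. \<Phi> u l * q l)"
      using sig_pos that by (intro tendsto_divide tendsto_mult tendsto_const Qlim Nlim) auto
    then show ?thesis using that by (simp add: posterior_def)
  qed
  have EF: "(\<lambda>n. edge_flow ?P (Gs n u) e) \<longlonglongrightarrow> edge_flow ?P (F u) e" if u: "u < z" and e: "e \<in> E" for u e
  proof (rule ef_conv[OF finP finE subP costsm _ _ _ _ _ e])
    show "\<forall>s<m. 0 \<le> posterior m \<Phi> q u s"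
      using Phinn u q_pos sig_pos by (auto simp: posterior_def intro!: divide_nonneg_pos)
    have "\<exists>s<m. \<Phi> u s * q s > 0"
    proof (rule ccontr)
      assume "\<not> ?thesis"
      then have "(\<Sum>l<m. \<Phi> u l * q l) \<le> 0" by (intro sum_nonpos) (auto simp: not_less dest: leD)
      then show False using sig_pos u by fastforce
    qed
    then obtain s where s: "s < m" "\<Phi> u s * q s > 0" by blast
    have "0 < \<Phi> u s * q s / (\<Sum>l<m. \<Phi> u l * q l)" using s sig_pos u by (intro divide_pos_pos) auto
    then show "\<exists>s<m. 0 < posterior m \<Phi> q u s" using s by (auto simp: posterior_def)
    show "\<forall>s<m. (\<lambda>n. posterior m \<Phi> (Q n) u s) \<longlonglongrightarrow> posterior m \<Phi> q u s" using postlim u by blast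
    show "F u \<in> wardrop C m ?P (posterior m \<Phi> q u)" using obs u by blast
    show "\<forall>n. Gs n u \<in> wardrop C m ?P (posterior m \<Phi> (Q n) u)" using Gs(1) u by blast
  qed
  have PClim: "(\<lambda>n. path_cost C ?P s (Gs n u) p) \<longlonglongrightarrow> path_cost C ?P s (F u) p"
    if u: "u < z" and p: "p \<in> ?P" and s: "s < m" for u p s
    unfolding path_cost_def
  proof (rule tendsto_sum)
    fix e assume "e \<in> path_edges p"
    then have e: "e \<in> E" using subP p by blast
    show "(\<lambda>n. C s e (edge_flow ?P (Gs n u) e)) \<longlonglongrightarrow> C s e (edge_flow ?P (F u) e)"
    proof (rule continuous_on_tendsto_compose[OF _ EF[OF u e]])
      show "continuous_on {0..} (C s e)" using cost s e by blast
      show "edge_flow ?P (F u) e \<in> {0..}" using ef_bounds[OF Ff[rule_format, OF u] finP] by simp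
      show "\<forall>\<^sub>F n in sequentially. edge_flow ?P (Gs n u) e \<in> {0..}"
        using ef_bounds[OF Gf[OF u] finP] by simp
    qed
  qed
  have ev1: "eventually (\<lambda>n. \<forall>u\<in>{..<z}. (\<Sum>l<m. \<Phi> u l * Q n l) > 0) sequentially"
  proof (rule eventually_ball_finite, simp, intro ballI)
    fix u assume "u \<in> {..<z}"
    then have "(\<Sum>l<m. \<Phi> u l * q l) > 0" using sig_pos by simp
    then show "eventually (\<lambda>n. (\<Sum>l<m. \<Phi> u l * Q n l) > 0) sequentially"
      by (rule order_tendstoD(1)[OF Nlim[of u]])
  qed
  have ev2: "eventually (\<lambda>n. \<forall>u\<in>{..<z}. \<forall>e\<in>E. edge_flow ?P (F u) e > 0 \<longrightarrow> edge_flow ?P (Gs n u) e > 0) sequentially"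
  proof (rule eventually_ball_finite, simp, intro ballI)
    fix u assume "u \<in> {..<z}"
    then have u: "u < z" by simp
    show "eventually (\<lambda>n. \<forall>e\<in>E. edge_flow ?P (F u) e > 0 \<longrightarrow> edge_flow ?P (Gs n u) e > 0) sequentially"
    proof (rule eventually_ball_finite[OF finE], intro ballI)
      fix e assume e: "e \<in> E"
      show "eventually (\<lambda>n. edge_flow ?P (F u) e > 0 \<longrightarrow> edge_flow ?P (Gs n u) e > 0) sequentially"
      proof (cases "edge_flow ?P (F u) e > 0")
        case True
        then show ?thesis using order_tendstoD(1)[OF EF[OF u e] True] by (auto elim: eventually_mono)
      next
        case False then show ?thesis by simp
      qed
    qed
  qed
  obtain N0 where N0: "\<And>n. n \<ge> N0 \<Longrightarrow> (\<forall>u\<in>{..<z}. (\<Sum>l<m. \<Phi> u l * Q n l) > 0) \<and>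
      (\<forall>u\<in>{..<z}. \<forall>e\<in>E. edge_flow ?P (F u) e > 0 \<longrightarrow> edge_flow ?P (Gs n u) e > 0)"
    using eventually_conj[OF ev1 ev2] unfolding eventually_sequentially by blast
  define good where "good n x \<longleftrightarrow> (\<Sum>s<m. \<bar>x s\<bar>) = 1 \<and> (\<Sum>s<m. x s) = 0 \<and>
    (\<forall>u<z. \<forall>p\<in>?P. \<forall>r\<in>?P. F u p > 0 \<longrightarrow> F u r > 0 \<longrightarrow> cdiff C m ?P \<Phi> (Gs n) u p r x = 0)" for n x
  have exgood: "\<exists>x. good n x" if "n \<ge> N0" for n
    unfolding good_def
  proof (rule key_step[OF finE costnn Phinn Q(1) Gs(1) _ Gs(2) Ff])
    show "\<forall>u<z. 0 < (\<Sum>l<m. \<Phi> u l * Q n l)" using N0[OF that] by auto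
    show "\<forall>u<z. \<forall>e\<in>E. 0 < edge_flow ?P (F u) e \<longrightarrow> 0 < edge_flow ?P (Gs n u) e" using N0[OF that] by auto
  qed
  define Xg where "Xg n = (SOME x. good n x)" for n
  have Xgood: "good (k + N0) (Xg (k + N0))" for k
  proof -
    have "\<exists>x. good (k + N0) x" by (rule exgood) simp
    then show ?thesis unfolding Xg_def by (rule someI_ex)
  qed
  define X where "X k s = (if s < m then Xg (k + N0) s else 0)" for k s
  have Xb: "\<forall>k s. \<bar>X k s\<bar> \<le> 1"
  proof (intro allI)
    fix k s
    show "\<bar>X k s\<bar> \<le> 1"
    proof (cases "s < m")
      case True
      have "\<bar>Xg (k + N0) s\<bar> \<le> (\<Sum>s<m. \<bar>Xg (k + N0) s\<bar>)" by (rule member_le_sum) (use True in auto)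
      then show ?thesis using Xgood[of k] True unfolding good_def X_def by simp
    qed (simp add: X_def)
  qed
  obtain \<sigma> l where \<sigma>: "strict_mono \<sigma>" and lim: "\<forall>s<m. (\<lambda>k. X (\<sigma> k) s) \<longlonglongrightarrow> l s"
    using bw[OF Xb, of m] by blast
  define R where "R k = \<sigma> k + N0" for k
  have R: "strict_mono R" using \<sigma> unfolding R_def strict_mono_def by simp
  have XR: "X (\<sigma> k) s = Xg (R k) s" if "s < m" for k s using that unfolding X_def R_def by simp
  have goodR: "good (R k) (Xg (R k))" for k using Xgood[of "\<sigma> k"] unfolding R_def .
  have abs1: "(\<Sum>s<m. \<bar>l s\<bar>) = 1" (is "?rhs = 1")
  proof -
    have "(\<lambda>k. \<Sum>s<m. \<bar>X (\<sigma> k) s\<bar>) \<longlonglongrightarrow> (\<Sum>s<m. \<bar>l s\<bar>)"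
      using lim by (intro tendsto_sum tendsto_rabs) auto
    moreover have "(\<Sum>s<m. \<bar>X (\<sigma> k) s\<bar>) = 1" for k
      using goodR[of k] XR unfolding good_def by simp
    ultimately have "(\<lambda>k. (1::real)) \<longlonglongrightarrow> ?rhs" by simp
    then show ?thesis using LIMSEQ_unique[OF tendsto_const] by metis
  qed
  have sum0: "(\<Sum>s<m. l s) = 0"
  proof -
    have "(\<lambda>k. \<Sum>s<m. X (\<sigma> k) s) \<longlonglongrightarrow> (\<Sum>s<m. l s)"
      using lim by (intro tendsto_sum) auto
    moreover have "(\<Sum>s<m. X (\<sigma> k) s) = 0" for k
      using goodR[of k] XR unfolding good_def by simp
    ultimately have "(\<lambda>k. (0::real)) \<longlonglongrightarrow> (\<Sum>s<m. l s)" by simp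
    then show ?thesis using LIMSEQ_unique[OF tendsto_const] by metis
  qed
  have eq0: "cdiff C m ?P \<Phi> F u p r l = 0"
    if u: "u < z" and p: "p \<in> ?P" and r: "r \<in> ?P" and fp: "F u p > 0" and fr: "F u r > 0" for u p r
  proof -
    have "(\<lambda>k. \<Sum>s<m. \<Phi> u s * (path_cost C ?P s (Gs (R k) u) p - path_cost C ?P s (Gs (R k) u) r) * X (\<sigma> k) s)
        \<longlonglongrightarrow> (\<Sum>s<m. \<Phi> u s * (path_cost C ?P s (F u) p - path_cost C ?P s (F u) r) * l s)"
    proof (intro tendsto_sum tendsto_mult tendsto_const tendsto_diff)
      fix s assume s: "s \<in> {..<m}"
      show "(\<lambda>k. X (\<sigma> k) s) \<longlonglongrightarrow> l s" using lim s by auto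
      show "(\<lambda>k. path_cost C ?P s (Gs (R k) u) p) \<longlonglongrightarrow> path_cost C ?P s (F u) p"
        using LIMSEQ_subseq_LIMSEQ[OF PClim[OF u p] R, of s] s by (simp add: comp_def)
      show "(\<lambda>k. path_cost C ?P s (Gs (R k) u) r) \<longlonglongrightarrow> path_cost C ?P s (F u) r"
        using LIMSEQ_subseq_LIMSEQ[OF PClim[OF u r] R, of s] s by (simp add: comp_def)
    qed
    moreover have "(\<Sum>s<m. \<Phi> u s * (path_cost C ?P s (Gs (R k) u) p - path_cost C ?P s (Gs (R k) u) r) * X (\<sigma> k) s) = 0" for k
    proof -
      have "cdiff C m ?P \<Phi> (Gs (R k)) u p r (Xg (R k)) = 0" using goodR[of k] u p r fp fr unfolding good_def by blast
      then show ?thesis unfolding cdiff_def using XR by simp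
    qed
    ultimately have "(\<lambda>k. (0::real)) \<longlonglongrightarrow> (\<Sum>s<m. \<Phi> u s * (path_cost C ?P s (F u) p - path_cost C ?P s (F u) r) * l s)"
      by simp
    then have "(\<Sum>s<m. \<Phi> u s * (path_cost C ?P s (F u) p - path_cost C ?P s (F u) r) * l s) = 0"
      using LIMSEQ_unique[OF tendsto_const] by metis
    then show ?thesis unfolding cdiff_def .
  qed
  define \<psi> where "\<psi> s = (if s < m then q s + l s else 0)" for s
  have qQ: "q \<in> Q_eq_Phi C m z ?P \<Phi> F" using Q_eq by blast
  have "\<psi> \<in> Q_eq_Phi C m z ?P \<Phi> F"
    unfolding Q_eq_Phi_def
  proof (intro CollectI conjI allI impI ballI)
    show "\<psi> s = 0" if "s \<ge> m" for s using that by (simp add: \<psi>_def)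
    have "(\<Sum>s<m. \<psi> s) = (\<Sum>s<m. q s + l s)" by (rule sum.cong) (auto simp: \<psi>_def)
    also have "\<dots> = 1" using q_simplex sum0 by (simp add: sum.distrib simplex_def)
    finally show "(\<Sum>s<m. \<psi> s) = 1" .
    fix u p r assume u: "u < z" and p: "p \<in> ?P" and r: "r \<in> ?P" and fp: "F u p > 0" and fr: "F u r > 0"
    have "cdiff C m ?P \<Phi> F u p r \<psi> = cdiff C m ?P \<Phi> F u p r (\<lambda>s. 1 * q s + 1 * l s)"
      unfolding cdiff_def by (rule sum.cong) (auto simp: \<psi>_def)
    also have "\<dots> = cdiff C m ?P \<Phi> F u p r q + cdiff C m ?P \<Phi> F u p r l" using cdiff_lin[where a=1 and b=1 and \<psi>=q and \<psi>'=l] by simp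
    also have "cdiff C m ?P \<Phi> F u p r q = 0" using qQ u p r fp fr unfolding Q_eq_Phi_def by blast
    also have "cdiff C m ?P \<Phi> F u p r l = 0" by (rule eq0[OF u p r fp fr])
    finally show "cdiff C m ?P \<Phi> F u p r \<psi> = 0" by simp
  qed
  then have "\<psi> = q" using Q_eq by blast
  then have "l s = 0" if "s < m" for s
  proof -
    have "\<psi> s = q s" using \<open>\<psi> = q\<close> by simp
    then show ?thesis using that unfolding \<psi>_def by simp
  qed
  then have "(\<Sum>s<m. \<bar>l s\<bar>) = 0" by simp
  with abs1 show False by simp
qed
end
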